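(* Let $M$ be a matroid of rank $r$ on the ground set $E=\{1,\dots,n\}$ and let $(E_1,E_2)$ be a good partition of $E$ with associated integers $r_1,r_2,a_1,a_2$. Let $M_1,M_2$ be the matroids on $E$ with bases $$\mathcal{B}(M_1)=\{B\in\mathcal{B}(M): |B\cap E_1|\le r_1-a_1\},\qquad \mathcal{B}(M_2)=\{B\in\mathcal{B}(M): |B\cap E_2|\le r_2-a_2\}.$$ Then $P(M)=P(M_1)\cup P(M_2)$ is a nontrivial hyperplane split of $P(M)$.
   Context: For a matroid $N$ on $E=\{1,\dots,n\}$ with set of bases $\mathcal{B}(N)$, the matroid base polytope is $P(N)=\mathrm{conv}\{\sum_{i\in B}e_i : B\in\mathcal{B}(N)\}\subset\mathbb{R}^n$, where $e_i$ is the $i$-th standard basis vector. A hyperplane split of $P(M)$ is an expression $P(M)=P(M_1)\cup P(M_2)$ with $M_1,M_2$ matroids on $E$ such that $P(M_1)\cap P(M_2)$ is a face of both $P(M_1)$ and $P(M_2)$; it is nontrivial if $P(M_1)\neq P(M)$ and $P(M_2)\neq P(M)$. For $A\subseteq E$, $M|_A$ denotes the restriction of $M$ to $A$, and $\mathcal{I}(N)$ the independent sets of $N$. A partition $(E_1,E_2)$ of $E$ with $r_i$ the rank of $M|_{E_i}$ and $r_i>1$ ($i=1,2$) is a good partition if there exist integers $0<a_1<r_1$, $0<a_2<r_2$ such that (P1) $r_1+r_2=r+a_1+a_2$ and (P2) for every $X\in\mathcal{I}(M|_{E_1})$ with $|X|\le r_1-a_1$ and every $Y\in\mathcal{I}(M|_{E_2})$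 with $|Y|\le r_2-a_2$, $X\cup Y\in\mathcal{I}(M)$. (These $\mathcal{B}(M_1),\mathcal{B}(M_2)$ are indeed collections of bases of matroids.) *)

theory Defs
  imports "HOL-Analysis.Analysis"
begin

text \<open>Matroids on the finite ground set E = UNIV of a finite type 'a, given by their
  collection of bases (base exchange axiom).\<close>
definition matroid_bases :: "('a::finite) set set \<Rightarrow> bool" where
  "matroid_bases \<B> \<longleftrightarrow> \<B> \<noteq> {} \<and>
     (\<forall>B1\<in>\<B>. \<forall>B2\<in>\<B>. \<forall>x\<in>B1 - B2. \<exists>y\<in>B2 - B1. insert y (B1 - {x}) \<in> \<B>)"

definition indep :: "('a::finite) set set \<Rightarrow> 'a set \<Rightarrow> bool" where
  "indep \<B> X \<longleftrightarrow> (\<exists>B\<in>\<B>. X \<subseteq> B)"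

definition rank_of :: "('a::finite) set set \<Rightarrow> 'a set \<Rightarrow> nat" where
  "rank_of \<B> A = Max {card X | X. indep \<B> X \<and> X \<subseteq> A}"

definition matroid_rank :: "('a::finite) set set \<Rightarrow> nat" where
  "matroid_rank \<B> = rank_of \<B> UNIV"

definition incidence_vector :: "('a::finite) set \<Rightarrow> real^'a" where
  "incidence_vector B = (\<chi> i. if i \<in> B then 1 else 0)"

definition base_polytope :: "('a::finite) set set \<Rightarrow> (real^'a) set" where
  "base_polytope \<B> = convex hull (incidence_vector ` \<B>)"

definition hyperplane_split :: "('a::finite) set set \<Rightarrow> 'a set set \<Rightarrow> 'a set set \<Rightarrow> bool" where
  "hyperplane_split \<B> \<B>1 \<B>2 \<longleftrightarrow> matroid_bases \<B>1 \<and> matroid_bases \<B>2 \<and>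
     base_polytope \<B> = base_polytope \<B>1 \<union> base_polytope \<B>2 \<and>
     (base_polytope \<B>1 \<inter> base_polytope \<B>2) face_of base_polytope \<B>1 \<and>
     (base_polytope \<B>1 \<inter> base_polytope \<B>2) face_of base_polytope \<B>2"

definition nontrivial_hyperplane_split :: "('a::finite) set set \<Rightarrow> 'a set set \<Rightarrow> 'a set set \<Rightarrow> bool" where
  "nontrivial_hyperplane_split \<B> \<B>1 \<B>2 \<longleftrightarrow> hyperplane_split \<B> \<B>1 \<B>2 \<and>
     base_polytope \<B>1 \<noteq> base_polytope \<B> \<and> base_polytope \<B>2 \<noteq> base_polytope \<B>"

definition good_partition :: "('a::finite) set set \<Rightarrow> 'a set \<Rightarrow> 'a set \<Rightarrow> nat \<Rightarrow> nat \<Rightarrow> bool" where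
  "good_partition \<B> E1 E2 a1 a2 \<longleftrightarrow>
     E1 \<inter> E2 = {} \<and> E1 \<union> E2 = UNIV \<and>
     rank_of \<B> E1 > 1 \<and> rank_of \<B> E2 > 1 \<and>
     0 < a1 \<and> a1 < rank_of \<B> E1 \<and> 0 < a2 \<and> a2 < rank_of \<B> E2 \<and>
     rank_of \<B> E1 + rank_of \<B> E2 = matroid_rank \<B> + a1 + a2 \<and>
     (\<forall>X Y. indep \<B> X \<and> X \<subseteq> E1 \<and> card X \<le> rank_of \<B> E1 - a1 \<and>
            indep \<B> Y \<and> Y \<subseteq> E2 \<and> card Y \<le> rank_of \<B> E2 - a2 \<longrightarrow> indep \<B> (X \<union> Y))"

end

theory Submission
  imports Defs
begin


lemma exch:
  assumes "matroid_bases \<B>" "B1 \<in> \<B>" "B2 \<in> \<B>" "x \<in> B1 - B2"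
  obtains y where "y \<in> B2 - B1" "insert y (B1 - {x}) \<in> \<B>"
  using assms unfolding matroid_bases_def by meson

lemma bases_card_eq:
  assumes M: "matroid_bases \<B>" and "B1 \<in> \<B>" "B2 \<in> \<B>"
  shows "card B1 = card B2"
  using assms(2,3)
proof (induction n \<equiv> "card (B1 - B2)" arbitrary: B1)
  case 0
  then have "B1 \<subseteq> B2" by auto
  moreover have "B2 \<subseteq> B1"
  proof
    fix x assume "x \<in> B2"
    show "x \<in> B1"
    proof (rule ccontr)
      assume "x \<notin> B1"
      then obtain y where "y \<in> B1 - B2" using M 0 \<open>x \<in> B2\<close> unfolding matroid_bases_def by blast
      then show False using \<open>B1 \<subseteq> B2\<close> by auto
    qed
  qed
  ultimately show ?case by auto
next
  case (Suc n)
  have "B1 - B2 \<noteq> {}" using Suc.hyps(2) by (metis card.empty nat.simps(3))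
  then obtain x where x: "x \<in> B1 - B2" by blast
  then obtain y where y: "y \<in> B2 - B1" "insert y (B1 - {x}) \<in> \<B>"
    using exch[OF M Suc.prems] by blast
  have "insert y (B1 - {x}) - B2 = (B1 - B2) - {x}" using x y by auto
  hence "card (insert y (B1 - {x}) - B2) = n" using Suc.hyps(2) x by simp
  hence "card (insert y (B1 - {x})) = card B2" using Suc y by blast
  moreover have "card (insert y (B1 - {x})) = card B1" using x y
  proof -
    have "y \<notin> B1 - {x}" using y by auto
    hence "card (insert y (B1 - {x})) = Suc (card (B1 - {x}))" by simp
    also have "\<dots> = card B1" using x card_Suc_Diff1[of B1 x] by simp
    finally show ?thesis .
  qed
  ultimately show ?case by simp
qed

lemma basis_extend:
  assumes M: "matroid_bases \<B>" and "B0 \<in> \<B>" "I \<subseteq> B0" "B \<in> \<B>"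
  shows "\<exists>B'\<in>\<B>. I \<subseteq> B' \<and> B' \<subseteq> I \<union> B"
  using assms(2,3)
proof (induction n \<equiv> "card (B0 - (I \<union> B))" arbitrary: B0)
  case 0
  then show ?case by auto
next
  case (Suc n)
  have "B0 - (I \<union> B) \<noteq> {}" using Suc.hyps(2) by (metis card.empty nat.simps(3))
  then obtain x where x: "x \<in> B0 - (I \<union> B)" by blast
  have "x \<in> B0 - B" using x by auto
  then obtain y where y: "y \<in> B - B0" "insert y (B0 - {x}) \<in> \<B>"
    using exch[OF M Suc.prems(1) assms(4)] by blast
  have "insert y (B0 - {x}) - (I \<union> B) = (B0 - (I \<union> B)) - {x}" using x y by auto
  hence "card (insert y (B0 - {x}) - (I \<union> B)) = n" using Suc.hyps(2) x by simp
  moreover have "I \<subseteq> insert y (B0 - {x})" using x Suc.prems by auto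
  ultimately show ?case using Suc.hyps(1) y by blast
qed

lemma indep_card_le:
  assumes M: "matroid_bases \<B>" and "indep \<B> X" "B \<in> \<B>"
  shows "card X \<le> card B"
proof -
  obtain B' where "B' \<in> \<B>" "X \<subseteq> B'" using assms(2) unfolding indep_def by auto
  moreover have "card B' = card B" using bases_card_eq[OF M \<open>B' \<in> \<B>\<close> assms(3)] .
  ultimately show ?thesis using card_mono[of B' X] by simp
qed

lemma indep_card_basis:
  assumes M: "matroid_bases \<B>" and "indep \<B> X" "B \<in> \<B>" "card X = card B"
  shows "X \<in> \<B>"
proof -
  obtain B' where "B' \<in> \<B>" "X \<subseteq> B'" using assms(2) unfolding indep_def by auto
  moreover have "card B' = card B" using bases_card_eq[OF M \<open>B' \<in> \<B>\<close> assms(3)] .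
  ultimately show ?thesis using assms(4) card_subset_eq[of B' X] by simp
qed

lemma indep_subset: "indep \<B> X \<Longrightarrow> Y \<subseteq> X \<Longrightarrow> indep \<B> Y"
  unfolding indep_def by blast

lemma augment:
  assumes M: "matroid_bases \<B>" and I: "indep \<B> I" and J: "indep \<B> J" and c: "card I < card J"
  shows "\<exists>y\<in>J - I. indep \<B> (insert y I)"
proof -
  obtain B where B: "B \<in> \<B>" "J \<subseteq> B" using J unfolding indep_def by auto
  obtain B0 where B0: "B0 \<in> \<B>" "I \<subseteq> B0" using I unfolding indep_def by auto
  obtain B' where B': "B' \<in> \<B>" "I \<subseteq> B'" "B' \<subseteq> I \<union> B" using basis_extend[OF M B0 B(1)] by auto
  show ?thesis
  proof (cases "B' \<inter> (J - I) = {}")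
    case False
    then obtain y where "y \<in> B' \<inter> (J - I)" by auto
    then show ?thesis using B' unfolding indep_def by blast
  next
    case True
    hence "B' \<subseteq> I \<union> (B - J)" using B' by auto
    hence "card B' \<le> card (I \<union> (B - J))" by (simp add: card_mono)
    also have "\<dots> \<le> card I + card (B - J)" by (rule card_Un_le)
    also have "card (B - J) = card B - card J" using B by (simp add: card_Diff_subset)
    finally have "card B' < card B" using c card_mono[of B J] B by simp
    then show ?thesis using bases_card_eq[OF M B'(1) B(1)] by simp
  qed
qed

lemma indep_empty: "matroid_bases \<B> \<Longrightarrow> indep \<B> {}"
  unfolding indep_def matroid_bases_def by auto

lemma rank_props:
  assumes M: "matroid_bases \<B>"
  shows "\<exists>X. indep \<B> X \<and> X \<subseteq> A \<and> card X = rank_of \<B> A"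
    and "indep \<B> Y \<Longrightarrow> Y \<subseteq> A \<Longrightarrow> card Y \<le> rank_of \<B> A"
proof -
  let ?S = "{card X | X. indep \<B> X \<and> X \<subseteq> A}"
  have eq: "?S = card ` {X. indep \<B> X \<and> X \<subseteq> A}" by blast
  have fin: "finite ?S" unfolding eq by simp
  have ne: "?S \<noteq> {}" using indep_empty[OF M] by blast
  show "\<exists>X. indep \<B> X \<and> X \<subseteq> A \<and> card X = rank_of \<B> A"
    using Max_in[OF fin ne] unfolding rank_of_def by auto
  show "indep \<B> Y \<Longrightarrow> Y \<subseteq> A \<Longrightarrow> card Y \<le> rank_of \<B> A"
    using Max_ge[OF fin] unfolding rank_of_def by blast
qed

lemma rank_witness_card:
  assumes M: "matroid_bases \<B>" and "j \<le> rank_of \<B> A"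
  shows "\<exists>X. indep \<B> X \<and> X \<subseteq> A \<and> card X = j"
proof -
  obtain X where X: "indep \<B> X" "X \<subseteq> A" "card X = rank_of \<B> A" using rank_props(1)[OF M] by blast
  obtain Y where "Y \<subseteq> X" "card Y = j" using obtain_subset_with_card_n[of j X] X assms(2) by auto
  then show ?thesis using X indep_subset by blast
qed

lemma matroid_rank_card:
  assumes M: "matroid_bases \<B>" and B: "B \<in> \<B>"
  shows "card B = matroid_rank \<B>"
proof -
  obtain X where X: "indep \<B> X" "card X = matroid_rank \<B>"
    using rank_props(1)[OF M, of UNIV] unfolding matroid_rank_def by blast
  have "card X \<le> card B" using indep_card_le[OF M X(1) B] .
  moreover have "indep \<B> B" using B unfolding indep_def by blast
  hence "card B \<le> matroid_rank \<B>" using rank_props(2)[OF M, of B UNIV] unfolding matroid_rank_def by simp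
  ultimately show ?thesis using X by simp
qed

lemma delta_mono:
  fixes \<psi> :: "nat \<Rightarrow> real"
  assumes cv: "\<And>j. 1 \<le> j \<Longrightarrow> j + 1 \<le> R \<Longrightarrow> 2 * \<psi> j \<le> \<psi> (j - 1) + \<psi> (j + 1)"
    and "i \<le> j"
  shows "j + 1 \<le> R \<longrightarrow> \<psi> (Suc i) - \<psi> i \<le> \<psi> (Suc j) - \<psi> j"
  using assms(2)
proof (induction j rule: dec_induct)
  case base
  then show ?case by simp
next
  case (step n)
  show ?case
  proof
    assume "Suc n + 1 \<le> R"
    hence "\<psi> (Suc i) - \<psi> i \<le> \<psi> (Suc n) - \<psi> n" using step by simp
    moreover have "2 * \<psi> (Suc n) \<le> \<psi> n + \<psi> (Suc (Suc n))"
      using cv[of "Suc n"] \<open>Suc n + 1 \<le> R\<close> by simp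
    ultimately show "\<psi> (Suc i) - \<psi> i \<le> \<psi> (Suc (Suc n)) - \<psi> (Suc n)" by simp
  qed
qed

lemma supp_line:
  fixes \<psi> :: "nat \<Rightarrow> real"
  assumes cv: "\<And>j. 1 \<le> j \<Longrightarrow> j + 1 \<le> R \<Longrightarrow> 2 * \<psi> j \<le> \<psi> (j - 1) + \<psi> (j + 1)"
    and t: "t < R" and j: "j \<le> R"
  shows "\<psi> t + (\<psi> (Suc t) - \<psi> t) * (real j - real t) \<le> \<psi> j"
proof (cases "t \<le> j")
  case True
  have "j \<le> R \<longrightarrow> \<psi> t + (\<psi> (Suc t) - \<psi> t) * (real j - real t) \<le> \<psi> j"
    using True
  proof (induction j rule: dec_induct)
    case base
    then show ?case by simp
  next
    case (step n)
    show ?case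
    proof
      assume "Suc n \<le> R"
      hence IH: "\<psi> t + (\<psi> (Suc t) - \<psi> t) * (real n - real t) \<le> \<psi> n" using step by simp
      have "\<psi> (Suc t) - \<psi> t \<le> \<psi> (Suc n) - \<psi> n"
        using delta_mono[where R=R and \<psi>=\<psi> and i=t and j=n] cv \<open>t \<le> n\<close> \<open>Suc n \<le> R\<close> by simp
      then show "\<psi> t + (\<psi> (Suc t) - \<psi> t) * (real (Suc n) - real t) \<le> \<psi> (Suc n)"
        using IH by (simp add: algebra_simps)
    qed
  qed
  then show ?thesis using j by simp
next
  case False
  hence "j \<le> t" by simp
  then show ?thesis
  proof (induction j rule: inc_induct)
    case base
    then show ?case by simp
  next
    case (step n)
    have "\<psi> (Suc n) - \<psi> n \<le> \<psi> (Suc t) - \<psi> t"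
      using delta_mono[where R=R and \<psi>=\<psi> and i=n and j=t] cv step.hyps t by simp
    then show ?case using step.IH by (simp add: algebra_simps)
  qed
qed

lemma core:
  fixes c :: "'a::finite \<Rightarrow> real"
  assumes M: "matroid_bases \<B>" and t: "t < rank_of \<B> E"
  shows "\<exists>X d. indep \<B> X \<and> X \<subseteq> E \<and> card X = t \<and>
     (\<forall>Y. indep \<B> Y \<and> Y \<subseteq> E \<longrightarrow> sum c X + d * (real (card Y) - real t) \<le> sum c Y)"
proof -
  define R where "R = rank_of \<B> E"
  define S where "S j = {Y. indep \<B> Y \<and> Y \<subseteq> E \<and> card Y = j}" for j
  define \<psi> where "\<psi> j = Min (sum c ` S j)" for j
  have fin: "finite (sum c ` S j)" for j by simp
  have ne: "sum c ` S j \<noteq> {}" if "j \<le> R" for j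
    using rank_witness_card[OF M, of j E] that unfolding S_def R_def by blast
  have le: "\<psi> (card Y) \<le> sum c Y" if "indep \<B> Y" "Y \<subseteq> E" for Y
    unfolding \<psi>_def by (rule Min_le[OF fin]) (use that in \<open>auto simp: S_def\<close>)
  have att: "\<exists>Y\<in>S j. sum c Y = \<psi> j" if "j \<le> R" for j
    using Min_in[OF fin ne[OF that]] unfolding \<psi>_def by auto
  have cv: "2 * \<psi> j \<le> \<psi> (j - 1) + \<psi> (j + 1)" if j: "1 \<le> j" "j + 1 \<le> R" for j
  proof -
    have "j - 1 \<le> R" using j by simp
    then obtain I where I: "I \<in> S (j - 1)" "sum c I = \<psi> (j - 1)" using att by blast
    obtain J where J: "J \<in> S (j + 1)" "sum c J = \<psi> (j + 1)" using att j(2) by blast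
    have "card I < card J" using I J j unfolding S_def by simp
    then obtain y where y: "y \<in> J - I" "indep \<B> (insert y I)"
      using augment[OF M] I J unfolding S_def by blast
    have "insert y I \<in> S j" using y I J j unfolding S_def by auto
    hence 1: "\<psi> j \<le> c y + sum c I" using le[of "insert y I"] y unfolding S_def by auto
    have "J - {y} \<in> S j" using y J j indep_subset[of \<B> J "J - {y}"] unfolding S_def by auto
    hence 2: "\<psi> j \<le> sum c (J - {y})" using le[of "J - {y}"] unfolding S_def by auto
    have "sum c J = c y + sum c (J - {y})" using y sum.remove[of J y c] by simp
    then show ?thesis using 1 2 I J by simp
  qed
  obtain X where X: "X \<in> S t" "sum c X = \<psi> t" using att[of t] t unfolding R_def by auto
  show ?thesis
  proof (intro exI[of _ X] exI[of _ "\<psi> (Suc t) - \<psi> t"] conjI allI impI)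
    show "indep \<B> X" "X \<subseteq> E" "card X = t" using X unfolding S_def by auto
    fix Y assume Y: "indep \<B> Y \<and> Y \<subseteq> E"
    have "card Y \<le> R" using rank_props(2)[OF M] Y unfolding R_def by blast
    then have "\<psi> t + (\<psi> (Suc t) - \<psi> t) * (real (card Y) - real t) \<le> \<psi> (card Y)"
      using supp_line[of R \<psi> t "card Y"] cv t unfolding R_def by blast
    then show "sum c X + (\<psi> (Suc t) - \<psi> t) * (real (card Y) - real t) \<le> sum c Y"
      using le[of Y] Y X by simp
  qed
qed



lemma split_lemma:
  fixes V :: "'n::euclidean_space set"
  assumes hyp: "\<And>y. y \<in> convex hull V \<Longrightarrow> inner a y = k \<Longrightarrow> y \<in> Q"
    and cQ: "convex Q" and up: "\<And>v. v \<in> V \<Longrightarrow> inner a v \<ge> k \<Longrightarrow> v \<in> Q"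
    and x: "x \<in> convex hull V" "inner a x \<ge> k"
  shows "x \<in> Q"
proof -
  let ?L = "{v\<in>V. inner a v < k}"
  let ?U = "{v\<in>V. inner a v \<ge> k}"
  have UQ: "convex hull ?U \<subseteq> Q" by (rule hull_minimal) (use up cQ in auto)
  have Lh: "convex hull ?L \<subseteq> {y. inner a y < k}"
    by (rule hull_minimal) (auto simp: convex_halfspace_lt)
  have Uh: "convex hull ?U \<subseteq> {y. inner a y \<ge> k}"
    by (rule hull_minimal) (auto simp: convex_halfspace_ge)
  have Vs: "V = ?L \<union> ?U" by auto
  show ?thesis
  proof (cases "?L = {}")
    case True
    then have "V = ?U" by auto
    then show ?thesis using x UQ by auto
  next
    case Lne: False
    show ?thesis
    proof (cases "?U = {}")
      case True
      then have "V = ?L" by auto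
      then show ?thesis using x Lh by fastforce
    next
      case Une: False
      have "V \<subseteq> convex hull ?L \<union> convex hull ?U" using Vs hull_subset[of ?L] hull_subset[of ?U] by blast
      hence "convex hull V \<subseteq> convex hull (convex hull ?L \<union> convex hull ?U)"
        by (metis hull_hull hull_mono)
      also have "\<dots> = {u *\<^sub>R s + v *\<^sub>R t | u v s t. u \<ge> 0 \<and> v \<ge> 0 \<and> u + v = 1 \<and> s \<in> convex hull ?L \<and> t \<in> convex hull ?U}"
        by (rule convex_hull_union_two) (use Lne Une in \<open>simp_all add: convex_convex_hull\<close>)
      finally obtain u v l w where xe: "x = u *\<^sub>R l + v *\<^sub>R w" and uv: "u \<ge> 0" "v \<ge> 0" "u + v = 1"
        and l: "l \<in> convex hull ?L" and w: "w \<in> convex hull ?U" using x(1) by blast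
      have la: "inner a l < k" using l Lh by auto
      have wa: "inner a w \<ge> k" using w Uh by auto
      have wQ: "w \<in> Q" using w UQ by auto
      have xa: "inner a x = u * inner a l + v * inner a w" using xe by (simp add: inner_add_right)
      show ?thesis
      proof (cases "u = 0")
        case True
        then have "x = w" using xe uv by simp
        then show ?thesis using wQ by simp
      next
        case False
        hence u0: "u > 0" using uv by simp
        define al where "al = inner a l"
        define aw where "aw = inner a w"
        have "k \<le> u * al + v * aw" using xa x(2) unfolding al_def aw_def by simp
        moreover have "u * k + v * k = k" using uv by (metis distrib_right mult_1)
        ultimately have "u * k + v * k \<le> u * al + v * aw" by simp
        moreover have "u * al < u * k" using u0 la unfolding al_def by simp
        ultimately have "v * k < v * aw" by linarith
        hence v0: "v > 0" and awk: "aw > k" using uv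
          by (auto simp: mult_less_cancel_left)
        have alk: "al < k" using la unfolding al_def .
        define t where "t = (k - al) / (aw - al)"
        have t0: "0 < t" and t1: "t < 1" unfolding t_def using alk awk by (auto simp: field_simps)
        have tv: "t \<le> v"
        proof -
          have uu: "u = 1 - v" using uv by simp
          have "k \<le> (1 - v) * al + v * aw" using \<open>k \<le> u * al + v * aw\<close> unfolding uu .
          hence "k \<le> al - v * al + v * aw" by (simp add: algebra_simps)
          hence "k - al \<le> v * (aw - al)" by (simp add: algebra_simps)
          then show ?thesis unfolding t_def using alk awk by (simp add: field_simps)
        qed
        define h where "h = (1 - t) *\<^sub>R l + t *\<^sub>R w"
        have lV: "l \<in> convex hull V" using l hull_mono[of ?L V] by auto
        have wV: "w \<in> convex hull V" using w hull_mono[of ?U V] by auto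
        have "h \<in> convex hull V" unfolding h_def
          using convexD[OF convex_convex_hull lV wV, of "1 - t" t] t0 t1 by simp
        moreover have "inner a h = k"
        proof -
          have "inner a h = (1 - t) * al + t * aw" unfolding h_def al_def aw_def by (simp add: inner_add_right)
          also have "\<dots> = al + t * (aw - al)" by (simp add: algebra_simps)
          also have "\<dots> = k" unfolding t_def using alk awk by simp
          finally show ?thesis .
        qed
        ultimately have hQ: "h \<in> Q" using hyp by blast
        define \<alpha> where "\<alpha> = u / (1 - t)"
        have a0: "0 \<le> \<alpha>" and a1: "\<alpha> \<le> 1" unfolding \<alpha>_def using uv t1 tv by (auto simp: field_simps)
        have au: "\<alpha> * (1 - t) = u" unfolding \<alpha>_def using t1 by simp
        have "\<alpha> *\<^sub>R h + (1 - \<alpha>) *\<^sub>R w = (\<alpha> * (1 - t)) *\<^sub>R l + (\<alpha> * t + (1 - \<alpha>)) *\<^sub>R w"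
          unfolding h_def by (simp add: algebra_simps)
        also have "\<alpha> * t + (1 - \<alpha>) = v" using au uv by (simp add: algebra_simps)
        finally have "x = \<alpha> *\<^sub>R h + (1 - \<alpha>) *\<^sub>R w" using xe au by simp
        then show ?thesis using convexD[OF cQ hQ wQ, of \<alpha> "1 - \<alpha>"] a0 a1 by simp
      qed
    qed
  qed
qed

lemma inner_iv: "inner a (incidence_vector B) = (\<Sum>i\<in>B. a $ i)"
  unfolding inner_vec_def incidence_vector_def
  by (simp add: if_distrib sum.If_cases cong: if_cong)

lemma inner_iv_card: "inner (incidence_vector E) (incidence_vector B) = real (card (B \<inter> E))"
  unfolding inner_iv by (simp add: incidence_vector_def sum.If_cases Int_commute)



lemma card_split:
  fixes B F G :: "'a::finite set"
  assumes "F \<inter> G = {}" "F \<union> G = UNIV"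
  shows "card (B \<inter> F) + card (B \<inter> G) = card B"
proof -
  have e: "(B \<inter> F) \<union> (B \<inter> G) = B" using assms by auto
  have "card ((B \<inter> F) \<union> (B \<inter> G)) = card (B \<inter> F) + card (B \<inter> G)"
    by (rule card_Un_disjoint) (use assms in auto)
  then show ?thesis unfolding e by simp
qed

lemma basis_indep: "B \<in> \<B> \<Longrightarrow> indep \<B> B"
  unfolding indep_def by blast

lemma fam_exch:
  assumes M: "matroid_bases \<B>" and FG: "F \<inter> G = {}" "F \<union> G = UNIV"
    and P2: "\<And>X Y. indep \<B> X \<Longrightarrow> X \<subseteq> G \<Longrightarrow> card X \<le> p \<Longrightarrow> indep \<B> Y \<Longrightarrow> Y \<subseteq> F \<Longrightarrow> card Y \<le> q \<Longrightarrow> indep \<B> (X \<union> Y)"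
    and pq: "p + q = matroid_rank \<B>"
    and ne: "{B\<in>\<B>. q \<le> card (B \<inter> F)} \<noteq> {}"
  shows "matroid_bases {B\<in>\<B>. q \<le> card (B \<inter> F)}"
  unfolding matroid_bases_def
proof (intro conjI ne ballI)
  fix B1 B2 x assume B1: "B1 \<in> {B\<in>\<B>. q \<le> card (B \<inter> F)}" and B2: "B2 \<in> {B\<in>\<B>. q \<le> card (B \<inter> F)}"
    and x: "x \<in> B1 - B2"
  obtain y where y: "y \<in> B2 - B1" "insert y (B1 - {x}) \<in> \<B>" using exch[OF M _ _ x] B1 B2 by auto
  show "\<exists>y\<in>B2 - B1. insert y (B1 - {x}) \<in> {B\<in>\<B>. q \<le> card (B \<inter> F)}"
  proof (cases "q \<le> card (insert y (B1 - {x}) \<inter> F)")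
    case True
    then show ?thesis using y by blast
  next
    case False
    have sub: "B1 \<inter> F - {x} \<subseteq> insert y (B1 - {x}) \<inter> F" by auto
    hence "card (B1 \<inter> F - {x}) \<le> card (insert y (B1 - {x}) \<inter> F)" by (simp add: card_mono)
    hence c1: "card (B1 \<inter> F - {x}) < q" using False by simp
    have xF: "x \<in> F"
    proof (rule ccontr)
      assume "x \<notin> F"
      hence "B1 \<inter> F - {x} = B1 \<inter> F" by auto
      then show False using c1 B1 by simp
    qed
    have x1: "x \<in> B1 \<inter> F" using x xF by auto
    have cY0: "card (B1 \<inter> F - {x}) = card (B1 \<inter> F) - 1" using x1 by simp
    have cB1F: "card (B1 \<inter> F) = q" using c1 cY0 B1 x1 card_gt_0_iff[of "B1 \<inter> F"] by auto
    have i1: "indep \<B> B1" "indep \<B> B2" using B1 B2 basis_indep by auto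
    have iY0: "indep \<B> (B1 \<inter> F - {x})" by (rule indep_subset[OF i1(1)]) auto
    have iJ: "indep \<B> (B2 \<inter> F)" by (rule indep_subset[OF i1(2)]) auto
    have "card (B1 \<inter> F - {x}) < card (B2 \<inter> F)" using c1 B2 by simp
    then obtain y' where y': "y' \<in> B2 \<inter> F - (B1 \<inter> F - {x})" "indep \<B> (insert y' (B1 \<inter> F - {x}))"
      using augment[OF M iY0 iJ] by blast
    have y'B1: "y' \<notin> B1" using y' x by auto
    have cBr: "card B1 = matroid_rank \<B>" using B1 by (intro matroid_rank_card[OF M]) simp
    have cG: "card (B1 \<inter> G) = p" using card_split[OF FG, of B1] cBr pq cB1F by simp
    have iX: "indep \<B> (B1 \<inter> G)" by (rule indep_subset[OF i1(1)]) auto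
    have "B1 \<inter> F \<noteq> {}" using x1 by auto
    hence "card (B1 \<inter> F) > 0" by (simp add: card_gt_0_iff)
    hence q1: "q \<ge> 1" using cB1F by simp
    have "y' \<notin> B1 \<inter> F - {x}" using y' by blast
    hence "card (insert y' (B1 \<inter> F - {x})) = Suc (card (B1 \<inter> F - {x}))" by simp
    hence cY: "card (insert y' (B1 \<inter> F - {x})) = q" using cY0 cB1F q1 by simp
    have iU: "indep \<B> ((B1 \<inter> G) \<union> insert y' (B1 \<inter> F - {x}))"
      using P2[OF iX _ _ y'(2)] cG cY y' by auto
    have eq: "(B1 \<inter> G) \<union> insert y' (B1 \<inter> F - {x}) = insert y' (B1 - {x})" using FG xF by auto
    have "card (insert y' (B1 - {x})) = card B1"
    proof -
      have "y' \<notin> B1 - {x}" using y'B1 by auto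
      hence "card (insert y' (B1 - {x})) = Suc (card (B1 - {x}))" by simp
      also have "\<dots> = card B1" using x card_Suc_Diff1[of B1 x] by simp
      finally show ?thesis .
    qed
    moreover have "indep \<B> (insert y' (B1 - {x}))" using iU eq by simp
    moreover have "B1 \<in> \<B>" using B1 by simp
    ultimately have inB: "insert y' (B1 - {x}) \<in> \<B>" using indep_card_basis[OF M] by blast
    have "insert y' (B1 \<inter> F - {x}) \<subseteq> insert y' (B1 - {x}) \<inter> F" using y' by auto
    hence "card (insert y' (B1 \<inter> F - {x})) \<le> card (insert y' (B1 - {x}) \<inter> F)" by (rule card_mono[rotated]) simp
    hence "q \<le> card (insert y' (B1 - {x}) \<inter> F)" using cY by simp
    then show ?thesis using inB y' y'B1 by blast
  qed
qed



lemma sum_split: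
  fixes B F G :: "'a::finite set" and c :: "'a \<Rightarrow> real"
  assumes "F \<inter> G = {}" "F \<union> G = UNIV"
  shows "sum c B = sum c (B \<inter> F) + sum c (B \<inter> G)"
proof -
  have e: "(B \<inter> F) \<union> (B \<inter> G) = B" using assms by auto
  have "sum c ((B \<inter> F) \<union> (B \<inter> G)) = sum c (B \<inter> F) + sum c (B \<inter> G)"
    by (rule sum.union_disjoint) (use assms in auto)
  then show ?thesis unfolding e by simp
qed

lemma prod_basis:
  fixes \<B> :: "('a::finite) set set"
  assumes M: "matroid_bases \<B>" and FG: "E1 \<inter> E2 = {}" "E1 \<union> E2 = UNIV"
    and sk: "s + k = matroid_rank \<B>"
    and P2: "\<And>X Y. indep \<B> X \<Longrightarrow> X \<subseteq> E1 \<Longrightarrow> card X \<le> s \<Longrightarrow> indep \<B> Y \<Longrightarrow> Y \<subseteq> E2 \<Longrightarrow> card Y \<le> k \<Longrightarrow> indep \<B> (X \<union> Y)"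
    and X: "indep \<B> X" "X \<subseteq> E1" "card X = s" and Y: "indep \<B> Y" "Y \<subseteq> E2" "card Y = k"
  shows "X \<union> Y \<in> \<B>" "card ((X \<union> Y) \<inter> E2) = k" "card ((X \<union> Y) \<inter> E1) = s"
proof -
  have i: "indep \<B> (X \<union> Y)" using P2[OF X(1,2) _ Y(1,2)] X Y by simp
  have "X \<inter> Y = {}" using X(2) Y(2) FG by auto
  hence "card (X \<union> Y) = s + k" using X Y by (simp add: card_Un_disjoint)
  have "\<B> \<noteq> {}" using M unfolding matroid_bases_def by simp
  then obtain B0 where B0: "B0 \<in> \<B>" by blast
  have "card B0 = s + k" using matroid_rank_card[OF M B0] sk by simp
  show "X \<union> Y \<in> \<B>" using indep_card_basis[OF M i B0] \<open>card (X \<union> Y) = s + k\<close> \<open>card B0 = s + k\<close> by simp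
  have "(X \<union> Y) \<inter> E2 = Y" using X Y FG by auto
  then show "card ((X \<union> Y) \<inter> E2) = k" using Y by simp
  have "(X \<union> Y) \<inter> E1 = X" using X Y FG by auto
  then show "card ((X \<union> Y) \<inter> E1) = s" using X by simp
qed

lemma hyp_lemma:
  fixes \<B> :: "('a::finite) set set"
  assumes M: "matroid_bases \<B>" and FG: "E1 \<inter> E2 = {}" "E1 \<union> E2 = UNIV"
    and s: "s < rank_of \<B> E1" and k: "k < rank_of \<B> E2" and sk: "s + k = matroid_rank \<B>"
    and P2: "\<And>X Y. indep \<B> X \<Longrightarrow> X \<subseteq> E1 \<Longrightarrow> card X \<le> s \<Longrightarrow> indep \<B> Y \<Longrightarrow> Y \<subseteq> E2 \<Longrightarrow> card Y \<le> k \<Longrightarrow> indep \<B> (X \<union> Y)"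
    and x: "x \<in> base_polytope \<B>" "inner (incidence_vector E2) x = real k"
  shows "x \<in> convex hull (incidence_vector ` {B \<in> \<B>. card (B \<inter> E2) = k})"
proof (rule ccontr)
  let ?T = "convex hull (incidence_vector ` {B \<in> \<B>. card (B \<inter> E2) = k})"
  let ?e = "incidence_vector E2"
  assume nx: "x \<notin> ?T"
  have "closed ?T"
    by (intro compact_imp_closed compact_convex_hull finite_imp_compact finite_imageI) simp
  then obtain a b where ab: "inner a x < b" "\<forall>y\<in>?T. inner a y > b"
    using separating_hyperplane_closed_point[OF convex_convex_hull _ nx] by blast
  define c where "c i = a $ i" for i
  obtain X1 d1 where X1: "indep \<B> X1" "X1 \<subseteq> E1" "card X1 = s"
    and d1: "\<And>Y. indep \<B> Y \<Longrightarrow> Y \<subseteq> E1 \<Longrightarrow> sum c X1 + d1 * (real (card Y) - real s) \<le> sum c Y"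
    using core[OF M s, of c] by blast
  obtain Y1 d2 where Y1: "indep \<B> Y1" "Y1 \<subseteq> E2" "card Y1 = k"
    and d2: "\<And>Y. indep \<B> Y \<Longrightarrow> Y \<subseteq> E2 \<Longrightarrow> sum c Y1 + d2 * (real (card Y) - real k) \<le> sum c Y"
    using core[OF M k, of c] by blast
  note pb = prod_basis[OF M FG sk P2 X1 Y1]
  have "incidence_vector (X1 \<union> Y1) \<in> ?T"
    by (rule hull_inc) (use pb in auto)
  hence gt: "inner a (incidence_vector (X1 \<union> Y1)) > b" using ab by blast
  have sXY: "inner a (incidence_vector (X1 \<union> Y1)) = sum c X1 + sum c Y1"
  proof -
    have "inner a (incidence_vector (X1 \<union> Y1)) = sum c (X1 \<union> Y1)" unfolding inner_iv c_def by simp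
    also have "\<dots> = sum c X1 + sum c Y1" by (rule sum.union_disjoint) (use X1 Y1 FG in auto)
    finally show ?thesis .
  qed
  define d where "d = d2 - d1"
  define m where "m = sum c X1 + sum c Y1 - d * real k"
  have hs: "incidence_vector ` \<B> \<subseteq> {y. inner (a - d *\<^sub>R ?e) y \<ge> m}"
  proof
    fix v assume "v \<in> incidence_vector ` \<B>"
    then obtain B where B: "B \<in> \<B>" "v = incidence_vector B" by blast
    have iB: "indep \<B> B" using B basis_indep by auto
    have i1: "indep \<B> (B \<inter> E1)" by (rule indep_subset[OF iB]) auto
    have i2: "indep \<B> (B \<inter> E2)" by (rule indep_subset[OF iB]) auto
    have h1: "sum c X1 + d1 * (real (card (B \<inter> E1)) - real s) \<le> sum c (B \<inter> E1)" using d1[OF i1] by simp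
    have h2: "sum c Y1 + d2 * (real (card (B \<inter> E2)) - real k) \<le> sum c (B \<inter> E2)" using d2[OF i2] by simp
    have cc: "card (B \<inter> E1) + card (B \<inter> E2) = s + k"
      using card_split[OF FG, of B] matroid_rank_card[OF M B(1)] sk by simp
    hence "real (card (B \<inter> E1)) - real s = real k - real (card (B \<inter> E2))" by linarith
    hence h1': "sum c X1 + d1 * (real k - real (card (B \<inter> E2))) \<le> sum c (B \<inter> E1)" using h1 by simp
    have sB: "inner a v = sum c (B \<inter> E1) + sum c (B \<inter> E2)"
      unfolding B(2) inner_iv c_def[symmetric] using sum_split[OF FG, of c B] by simp
    have eB: "inner ?e v = real (card (B \<inter> E2))" unfolding B(2) inner_iv_card ..
    have "inner (a - d *\<^sub>R ?e) v = inner a v - d * real (card (B \<inter> E2))"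
      by (simp add: inner_diff_left eB)
    also have "\<dots> \<ge> m" unfolding m_def d_def sB using h1' h2 by (simp add: algebra_simps)
    finally show "v \<in> {y. inner (a - d *\<^sub>R ?e) y \<ge> m}" by simp
  qed
  have "base_polytope \<B> \<subseteq> {y. inner (a - d *\<^sub>R ?e) y \<ge> m}"
    unfolding base_polytope_def by (rule hull_minimal[OF hs]) (rule convex_halfspace_ge)
  hence "inner (a - d *\<^sub>R ?e) x \<ge> m" using x(1) by blast
  hence "inner a x - d * real k \<ge> m" using x(2) by (simp add: inner_diff_left)
  hence "inner a x \<ge> sum c X1 + sum c Y1" unfolding m_def by simp
  then show False using gt sXY ab(1) by simp
qed



theorem theorem1:
  fixes \<B> :: "('a::finite) set set" and E1 E2 :: "'a set" and a1 a2 :: nat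
  assumes "matroid_bases \<B>"
    and "good_partition \<B> E1 E2 a1 a2"
  shows "nontrivial_hyperplane_split \<B>
           {B \<in> \<B>. card (B \<inter> E1) \<le> rank_of \<B> E1 - a1}
           {B \<in> \<B>. card (B \<inter> E2) \<le> rank_of \<B> E2 - a2}"
proof -
  note M = assms(1)
  define r1 where "r1 = rank_of \<B> E1"
  define r2 where "r2 = rank_of \<B> E2"
  define r where "r = matroid_rank \<B>"
  define s where "s = r1 - a1"
  define k where "k = r2 - a2"
  have FG: "E1 \<inter> E2 = {}" "E1 \<union> E2 = UNIV" using assms(2) unfolding good_partition_def by auto
  have FG': "E2 \<inter> E1 = {}" "E2 \<union> E1 = UNIV" using FG by auto
  have nums: "0 < a1" "a1 < r1" "0 < a2" "a2 < r2" "r1 + r2 = r + a1 + a2"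
    using assms(2) unfolding good_partition_def r1_def r2_def r_def by auto
  have sk: "s + k = r" "s < r1" "k < r2" using nums unfolding s_def k_def by auto
  have P2: "\<And>X Y. indep \<B> X \<Longrightarrow> X \<subseteq> E1 \<Longrightarrow> card X \<le> s \<Longrightarrow> indep \<B> Y \<Longrightarrow> Y \<subseteq> E2 \<Longrightarrow> card Y \<le> k \<Longrightarrow> indep \<B> (X \<union> Y)"
    using assms(2) unfolding good_partition_def s_def k_def r1_def r2_def by blast
  have P2': "\<And>X Y. indep \<B> X \<Longrightarrow> X \<subseteq> E2 \<Longrightarrow> card X \<le> k \<Longrightarrow> indep \<B> Y \<Longrightarrow> Y \<subseteq> E1 \<Longrightarrow> card Y \<le> s \<Longrightarrow> indep \<B> (X \<union> Y)"
    using P2 by (metis Un_commute)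
  have cardB: "card (B \<inter> E1) + card (B \<inter> E2) = s + k" if "B \<in> \<B>" for B
    using card_split[OF FG, of B] matroid_rank_card[OF M that] sk unfolding r_def by simp
  have eq1: "{B \<in> \<B>. card (B \<inter> E1) \<le> rank_of \<B> E1 - a1} = {B \<in> \<B>. k \<le> card (B \<inter> E2)}"
    using cardB unfolding s_def[symmetric] r1_def[symmetric] by fastforce
  have eq2: "{B \<in> \<B>. card (B \<inter> E2) \<le> rank_of \<B> E2 - a2} = {B \<in> \<B>. s \<le> card (B \<inter> E1)}"
    using cardB unfolding k_def[symmetric] r2_def[symmetric] by fastforce
  obtain X0 where X0: "indep \<B> X0" "X0 \<subseteq> E1" "card X0 = s"
    using rank_witness_card[OF M, of s E1] sk unfolding r1_def by auto
  obtain Y0 where Y0: "indep \<B> Y0" "Y0 \<subseteq> E2" "card Y0 = k"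
    using rank_witness_card[OF M, of k E2] sk unfolding r2_def by auto
  note pb = prod_basis[OF M FG _ P2 X0 Y0]
  have B0: "X0 \<union> Y0 \<in> \<B>" "card ((X0 \<union> Y0) \<inter> E2) = k" "card ((X0 \<union> Y0) \<inter> E1) = s"
    using pb sk unfolding r_def by auto
  have mb1: "matroid_bases {B \<in> \<B>. k \<le> card (B \<inter> E2)}"
    by (rule fam_exch[OF M FG' P2]) (use sk B0 in \<open>auto simp: r_def\<close>)
  have mb2: "matroid_bases {B \<in> \<B>. s \<le> card (B \<inter> E1)}"
    by (rule fam_exch[OF M FG P2']) (use sk B0 in \<open>auto simp: r_def\<close>)
  let ?B1 = "{B \<in> \<B>. card (B \<inter> E1) \<le> rank_of \<B> E1 - a1}"
  let ?B2 = "{B \<in> \<B>. card (B \<inter> E2) \<le> rank_of \<B> E2 - a2}"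
  let ?P = "base_polytope \<B>"
  let ?Q1 = "base_polytope ?B1"
  let ?Q2 = "base_polytope ?B2"
  let ?T = "convex hull (incidence_vector ` {B \<in> \<B>. card (B \<inter> E2) = k})"
  let ?e1 = "incidence_vector E1"
  let ?e2 = "incidence_vector E2"
  have cQ1: "convex ?Q1" and cQ2: "convex ?Q2" unfolding base_polytope_def by (simp_all add: convex_convex_hull)
  have Q1ge: "?Q1 \<subseteq> {y. inner ?e2 y \<ge> real k}"
    unfolding base_polytope_def
    by (rule hull_minimal) (auto simp: eq1 inner_iv_card convex_halfspace_ge)
  have Q2le: "?Q2 \<subseteq> {y. inner ?e2 y \<le> real k}"
    unfolding base_polytope_def
    by (rule hull_minimal) (auto simp: k_def r2_def inner_iv_card convex_halfspace_le)
  have Q1e1: "?Q1 \<subseteq> {y. inner ?e1 y \<le> real s}"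
    unfolding base_polytope_def
    by (rule hull_minimal) (auto simp: s_def r1_def inner_iv_card convex_halfspace_le)
  have TQ1: "?T \<subseteq> ?Q1" unfolding base_polytope_def eq1 by (rule hull_mono) auto
  have TQ2: "?T \<subseteq> ?Q2" unfolding base_polytope_def
    by (rule hull_mono) (auto simp: k_def r2_def)
  have Q1P: "?Q1 \<subseteq> ?P" unfolding base_polytope_def by (rule hull_mono) auto
  have Q2P: "?Q2 \<subseteq> ?P" unfolding base_polytope_def by (rule hull_mono) auto
  have HYP: "y \<in> ?T" if "y \<in> ?P" "inner ?e2 y = real k" for y
    by (rule hyp_lemma[OF M FG _ _ _ P2 that]) (use sk in \<open>auto simp: r1_def r2_def r_def\<close>)
  have split: "?P = ?Q1 \<union> ?Q2"
  proof
    show "?Q1 \<union> ?Q2 \<subseteq> ?P" using Q1P Q2P by auto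
    show "?P \<subseteq> ?Q1 \<union> ?Q2"
    proof
      fix x assume x: "x \<in> ?P"
      show "x \<in> ?Q1 \<union> ?Q2"
      proof (cases "inner ?e2 x \<ge> real k")
        case True
        have "x \<in> ?Q1"
        proof (rule split_lemma[of "incidence_vector ` \<B>" ?e2 "real k" ?Q1 x])
          show "y \<in> ?Q1" if "y \<in> convex hull (incidence_vector ` \<B>)" "inner ?e2 y = real k" for y
            using HYP[of y] that TQ1 unfolding base_polytope_def by auto
          show "convex ?Q1" by (rule cQ1)
          show "v \<in> ?Q1" if vv: "v \<in> incidence_vector ` \<B>" "inner ?e2 v \<ge> real k" for v
          proof -
            obtain B where B: "B \<in> \<B>" "v = incidence_vector B" using vv(1) by blast
            have "B \<in> ?B1" unfolding eq1 using B vv(2) by (simp add: inner_iv_card)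
            then show ?thesis unfolding base_polytope_def B(2) by (rule hull_inc[OF imageI])
          qed
          show "x \<in> convex hull (incidence_vector ` \<B>)" using x unfolding base_polytope_def .
          show "inner ?e2 x \<ge> real k" by (rule True)
        qed
        then show ?thesis by simp
      next
        case False
        have "x \<in> ?Q2"
        proof (rule split_lemma[of "incidence_vector ` \<B>" "- ?e2" "- real k" ?Q2 x])
          show "y \<in> ?Q2" if "y \<in> convex hull (incidence_vector ` \<B>)" "inner (- ?e2) y = - real k" for y
            using HYP[of y] that TQ2 unfolding base_polytope_def by auto
          show "convex ?Q2" by (rule cQ2)
          show "v \<in> ?Q2" if vv: "v \<in> incidence_vector ` \<B>" "inner (- ?e2) v \<ge> - real k" for v
          proof -
            obtain B where B: "B \<in> \<B>" "v = incidence_vector B" using vv(1) by blast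
            have "B \<in> ?B2" using B vv(2) by (simp add: inner_iv_card k_def r2_def)
            then show ?thesis unfolding base_polytope_def B(2) by (rule hull_inc[OF imageI])
          qed
          show "x \<in> convex hull (incidence_vector ` \<B>)" using x unfolding base_polytope_def .
          show "inner (- ?e2) x \<ge> - real k" using False by simp
        qed
        then show ?thesis by simp
      qed
    qed
  qed
  have I1: "?Q1 \<inter> ?Q2 = ?Q1 \<inter> {y. inner ?e2 y = real k}"
  proof
    show "?Q1 \<inter> ?Q2 \<subseteq> ?Q1 \<inter> {y. inner ?e2 y = real k}" using Q1ge Q2le by fastforce
    show "?Q1 \<inter> {y. inner ?e2 y = real k} \<subseteq> ?Q1 \<inter> ?Q2" using HYP Q1P TQ2 by blast
  qed
  have I2: "?Q1 \<inter> ?Q2 = ?Q2 \<inter> {y. inner ?e2 y = real k}"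
  proof
    show "?Q1 \<inter> ?Q2 \<subseteq> ?Q2 \<inter> {y. inner ?e2 y = real k}" using Q1ge Q2le by fastforce
    show "?Q2 \<inter> {y. inner ?e2 y = real k} \<subseteq> ?Q1 \<inter> ?Q2" using HYP Q2P TQ1 by blast
  qed
  have F1: "(?Q1 \<inter> ?Q2) face_of ?Q1"
    unfolding I1 by (rule face_of_Int_supporting_hyperplane_ge[OF cQ1]) (use Q1ge in blast)
  have F2: "(?Q1 \<inter> ?Q2) face_of ?Q2"
    unfolding I2 by (rule face_of_Int_supporting_hyperplane_le[OF cQ2]) (use Q2le in blast)
  have nt1: "?Q1 \<noteq> ?P"
  proof -
    obtain X where X: "indep \<B> X" "X \<subseteq> E1" "card X = r1" using rank_props(1)[OF M, of E1] unfolding r1_def by blast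
    obtain B where B: "B \<in> \<B>" "X \<subseteq> B" using X(1) unfolding indep_def by blast
    have "card X \<le> card (B \<inter> E1)" by (rule card_mono) (use B X in auto)
    hence "inner ?e1 (incidence_vector B) > real s" using X sk by (simp add: inner_iv_card)
    moreover have "incidence_vector B \<in> ?P" unfolding base_polytope_def using B by (intro hull_inc imageI)
    ultimately show ?thesis using Q1e1 by force
  qed
  have nt2: "?Q2 \<noteq> ?P"
  proof -
    obtain X where X: "indep \<B> X" "X \<subseteq> E2" "card X = r2" using rank_props(1)[OF M, of E2] unfolding r2_def by blast
    obtain B where B: "B \<in> \<B>" "X \<subseteq> B" using X(1) unfolding indep_def by blast
    have "card X \<le> card (B \<inter> E2)" by (rule card_mono) (use B X in auto)
    hence "inner ?e2 (incidence_vector B) > real k" using X sk by (simp add: inner_iv_card)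
    moreover have "incidence_vector B \<in> ?P" unfolding base_polytope_def using B by (intro hull_inc imageI)
    ultimately show ?thesis using Q2le by force
  qed
  show ?thesis
    unfolding nontrivial_hyperplane_split_def hyperplane_split_def
    using mb1 mb2 split F1 F2 nt1 nt2 eq1 eq2 by simp
qed


end
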